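(* Let $\boldsymbol\nu=\{\nu_t\}_{t>0}$ be a measurable factorizing family over $[0,1]\times\{\ast\}$. Fix $s,t>0$ and for $\lambda>0$ put $u=\lambda(s+t)$, $u_1=\lambda s$, $u_2=\lambda t$, and $\sigma_{u_1,u_2}:=(\nu_{u_1}\otimes\nu_{u_2})\circ\oplus_{u_1,u_2}^{-1}$ on $\mathscr C_u^{\{\ast\}}$. Let $E_{00}=\{\varnothing\}$, $E_{10}=\{Z\cap[0,u_1]\neq\varnothing,\ Z\cap[u_1,u]=\varnothing\}$, $E_{01}=\{Z\cap[0,u_1]=\varnothing,\ Z\cap[u_1,u]\neq\varnothing\}$, $E_{11}=\{Z\cap[0,u_1]\neq\varnothing,\ Z\cap[u_1,u]\neq\varnothing\}$. Assume that as $\lambda\downarrow0$: (i) $\nu_u(Z\neq\varnothing)=O(u)$ and $\nu_{u_i}(Z\neq\varnothing)=O(u_i)$ for $i=1,2$; (ii) $\nu_u(E_{11})=O(u^2)$; (iii) $|\nu_u(\{\varnothing\})-\nu_{u_1}(\{\varnothing\})\nu_{u_2}(\{\varnothing\})|=O(u^2)$; (iv) $d_{\mathrm{Hell}}^2(\nu_u|_{E_{10}},\sigma_{u_1,u_2}|_{E_{10}})=O(u^2)$ and $d_{\mathrm{Hell}}^2(\nu_u|_{E_{01}},\sigma_{u_1,u_2}|_{E_{01}})=O(u^2)$. Then $1-H(\nu_u,\sigma_{u_1,u_2})=O(u^2)$.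
   Context: $\mathscr C_t^{\{\ast\}}$ is the space of closed subsets of $[0,t]$ with Borel $\sigma$-field $\Sigma_t$ of the Fell topology; $\oplus_{s,t}(Z_1,Z_2)=Z_1\cup(s+Z_2)$; $\sigma_t(Z)=\{r/t:r\in Z\}$. A measurable factorizing family over $[0,1]\times\{\ast\}$ is a family of probability measures $\nu_t$ on $\mathscr C_t^{\{\ast\}}$ with: (i) $\nu_{s+t}$ and $(\nu_s\otimes\nu_t)\circ\oplus_{s,t}^{-1}$ mutually absolutely continuous; (ii) $\nu_t(\{Z:r\in Z\})=0$ for all $r\in[0,t]$; (iii) no $\nu_t$ supported on finitely many atoms; (iv a) a countable ring $\mathcal R\subset\Sigma_1$ generating $\Sigma_1$ with $t\mapsto(\sigma_t)_*\nu_t(A)$ Borel for $A\in\mathcal R$; (iv b) a Borel $\Delta$ on $(0,\infty)^2\times\mathscr C_1^{\{\ast\}}$ with $\Delta(s,t,\sigma_{s+t}(Z))=d((\nu_s\otimes\nu_t)\circ\oplus_{s,t}^{-1})/d\nu_{s+t}(Z)$ a.e. For finite measures $\rho,\eta$ on a measurable space $X$ dominated by a finite measure $m$: $H(\rho,\eta)=\int\sqrt{(d\rho/dm)(d\eta/dm)}\,dm$ and $d^2_{\mathrm{Hell}}(\rho,\eta)=\rho(X)+\eta(X)-2H(\rho,\eta)$. $\rho|_E$ denotes the restriction $\rho(\cdot\cap E)$. *)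

theory Defs
  imports "HOL-Probability.Probability" "HOL-Library.Landau_Symbols"
begin

definition Cspace :: "real \<Rightarrow> real set set" where
  "Cspace t = {Z. closed Z \<and> Z \<subseteq> {0..t}}"

definition fell_topology :: "real \<Rightarrow> real set topology" where
  "fell_topology t = subtopology
     (topology_generated_by
        ({{F. F \<inter> K = {}} | K. compact K} \<union> {{F. F \<inter> G \<noteq> {}} | G. open G}))
     (Cspace t)"

definition borel_of_top :: "'a topology \<Rightarrow> 'a measure" where
  "borel_of_top T = sigma (topspace T) {U. openin T U}"

definition Cmeas :: "real \<Rightarrow> real set measure" where
  "Cmeas t = borel_of_top (fell_topology t)"

definition oplus :: "real \<Rightarrow> real \<Rightarrow> real set \<times> real set \<Rightarrow> real set" where
  "oplus s t = (\<lambda>(Z1, Z2). Z1 \<union> (\<lambda>r. s + r) ` Z2)"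

definition scaleC :: "real \<Rightarrow> real set \<Rightarrow> real set" where
  "scaleC t Z = (\<lambda>r. r / t) ` Z"

definition conv_meas :: "(real \<Rightarrow> real set measure) \<Rightarrow> real \<Rightarrow> real \<Rightarrow> real set measure" where
  "conv_meas \<nu> s t = distr (\<nu> s \<Otimes>\<^sub>M \<nu> t) (Cmeas (s + t)) (oplus s t)"

definition measurable_factorizing_family :: "(real \<Rightarrow> real set measure) \<Rightarrow> bool" where
  "measurable_factorizing_family \<nu> \<longleftrightarrow>
     (\<forall>t>0. prob_space (\<nu> t) \<and> sets (\<nu> t) = sets (Cmeas t) \<and> space (\<nu> t) = space (Cmeas t))
   \<and> (\<forall>s>0. \<forall>t>0. absolutely_continuous (\<nu> (s + t)) (conv_meas \<nu> s t)
                   \<and> absolutely_continuous (conv_meas \<nu> s t) (\<nu> (s + t)))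
   \<and> (\<forall>t>0. \<forall>r\<in>{0..t}. emeasure (\<nu> t) {Z \<in> space (\<nu> t). r \<in> Z} = 0)
   \<and> (\<forall>t>0. \<not> (\<exists>F. finite F \<and> F \<subseteq> space (\<nu> t) \<and> emeasure (\<nu> t) (space (\<nu> t) - F) = 0))
   \<and> (\<exists>R. countable R \<and> ring_of_sets (space (Cmeas 1)) R
          \<and> sets (Cmeas 1) = sigma_sets (space (Cmeas 1)) R
          \<and> (\<forall>A\<in>R. (\<lambda>t. measure (distr (\<nu> t) (Cmeas 1) (scaleC t)) A)
                       \<in> borel_measurable (restrict_space borel {0<..})))
   \<and> (\<exists>\<Delta> :: (real \<times> real) \<times> real set \<Rightarrow> ennreal.
          \<Delta> \<in> borel_measurable (restrict_space borel ({0<..} \<times> {0<..}) \<Otimes>\<^sub>M Cmeas 1)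
        \<and> (\<forall>s>0. \<forall>t>0. AE Z in \<nu> (s + t).
              \<Delta> ((s, t), scaleC (s + t) Z) = RN_deriv (\<nu> (s + t)) (conv_meas \<nu> s t) Z))"

definition restr :: "'a measure \<Rightarrow> 'a set \<Rightarrow> 'a measure" where
  "restr \<rho> E = density \<rho> (indicator E)"

text \<open>The dominating finite measure m = rho + eta (same measurable space assumed).\<close>
definition sum_meas :: "'a measure \<Rightarrow> 'a measure \<Rightarrow> 'a measure" where
  "sum_meas \<rho> \<eta> = measure_of (space \<rho>) (sets \<rho>) (\<lambda>A. emeasure \<rho> A + emeasure \<eta> A)"

definition hell_aff :: "'a measure \<Rightarrow> 'a measure \<Rightarrow> real" where
  "hell_aff \<rho> \<eta> = (let m = sum_meas \<rho> \<eta> in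
     enn2real (\<integral>\<^sup>+ x. ennreal (sqrt (enn2real (RN_deriv m \<rho> x) * enn2real (RN_deriv m \<eta> x))) \<partial>m))"

definition hell_sq :: "'a measure \<Rightarrow> 'a measure \<Rightarrow> real" where
  "hell_sq \<rho> \<eta> = measure \<rho> (space \<rho>) + measure \<eta> (space \<eta>) - 2 * hell_aff \<rho> \<eta>"

end

theory Submission
  imports Defs
begin


lemma space_Cmeas: "space (Cmeas x) = Cspace x"
proof -
  have "topspace (fell_topology x) = Cspace x"
    unfolding fell_topology_def by (auto simp: topspace_subtopology)
  then show ?thesis unfolding Cmeas_def borel_of_top_def
    by (subst space_measure_of) (auto dest: openin_subset)
qed

lemma miss_sets:
  assumes "compact K"
  shows "{Z \<in> Cspace x. Z \<inter> K = {}} \<in> sets (Cmeas x)"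
proof -
  have "openin (fell_topology x) ({F. F \<inter> K = {}} \<inter> Cspace x)"
    unfolding fell_topology_def openin_subtopology
    by (rule exI[of _ "{F. F \<inter> K = {}}"]) (auto intro!: topology_generated_by_Basis assms)
  moreover have "{F. F \<inter> K = {}} \<inter> Cspace x = {Z \<in> Cspace x. Z \<inter> K = {}}" by auto
  ultimately have "openin (fell_topology x) {Z \<in> Cspace x. Z \<inter> K = {}}" by simp
  then show ?thesis unfolding Cmeas_def borel_of_top_def
    by (subst sets_measure_of) (auto dest: openin_subset)
qed



lemma sum_meas_sets:
  assumes "sets \<eta> = sets \<rho>"
  shows "sets (sum_meas \<rho> \<eta>) = sets \<rho>" "space (sum_meas \<rho> \<eta>) = space \<rho>"
  unfolding sum_meas_def by (auto simp: sets.space_closed)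

lemma sum_meas_emeasure:
  assumes "sets \<eta> = sets \<rho>" "A \<in> sets \<rho>"
  shows "emeasure (sum_meas \<rho> \<eta>) A = emeasure \<rho> A + emeasure \<eta> A"
  unfolding sum_meas_def
proof (rule emeasure_measure_of_sigma)
  show "sigma_algebra (space \<rho>) (sets \<rho>)" by (rule sets.sigma_algebra_axioms)
  show "positive (sets \<rho>) (\<lambda>A. emeasure \<rho> A + emeasure \<eta> A)"
    by (simp add: positive_def)
  show "countably_additive (sets \<rho>) (\<lambda>A. emeasure \<rho> A + emeasure \<eta> A)"
    unfolding countably_additive_def
  proof (intro allI impI)
    fix B :: "nat \<Rightarrow> _"
    assume B: "range B \<subseteq> sets \<rho>" "disjoint_family B" "\<Union> (range B) \<in> sets \<rho>"
    have B': "range B \<subseteq> sets \<eta>" using B assms by simp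
    have "(\<Sum>i. emeasure \<rho> (B i) + emeasure \<eta> (B i)) = (\<Sum>i. emeasure \<rho> (B i)) + (\<Sum>i. emeasure \<eta> (B i))"
      by (rule suminf_add[symmetric]) auto
    also have "\<dots> = emeasure \<rho> (\<Union> (range B)) + emeasure \<eta> (\<Union> (range B))"
      using suminf_emeasure[OF B(1,2)] suminf_emeasure[OF B' B(2)] by simp
    finally show "(\<Sum>i. emeasure \<rho> (B i) + emeasure \<eta> (B i)) = emeasure \<rho> (\<Union> (range B)) + emeasure \<eta> (\<Union> (range B))" .
  qed
qed (use assms in auto)

lemma sum_meas_finite:
  assumes "sets \<eta> = sets \<rho>" "finite_measure \<rho>" "finite_measure \<eta>"
  shows "finite_measure (sum_meas \<rho> \<eta>)"
proof (rule finite_measureI)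
  have sp: "space \<eta> = space \<rho>" using assms(1) by (rule sets_eq_imp_space_eq)
  show "emeasure (sum_meas \<rho> \<eta>) (space (sum_meas \<rho> \<eta>)) \<noteq> \<infinity>"
    using sum_meas_sets[OF assms(1)] sum_meas_emeasure[OF assms(1) sets.top] sp assms(2,3)
    by (simp add: finite_measure.emeasure_finite)
qed

lemma sum_meas_ac:
  assumes "sets \<eta> = sets \<rho>"
  shows "absolutely_continuous (sum_meas \<rho> \<eta>) \<rho>" "absolutely_continuous (sum_meas \<rho> \<eta>) \<eta>"
  unfolding absolutely_continuous_def
  using sum_meas_emeasure[OF assms] sum_meas_sets[OF assms] assms
  by (auto simp: null_sets_def)

definition hfun :: "'a measure \<Rightarrow> 'a measure \<Rightarrow> 'a \<Rightarrow> ennreal" where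
  "hfun \<rho> \<eta> x = ennreal (sqrt (enn2real (RN_deriv (sum_meas \<rho> \<eta>) \<rho> x) * enn2real (RN_deriv (sum_meas \<rho> \<eta>) \<eta> x)))"

lemma hell_aff_hfun: "hell_aff \<rho> \<eta> = enn2real (\<integral>\<^sup>+x. hfun \<rho> \<eta> x \<partial>sum_meas \<rho> \<eta>)"
  unfolding hell_aff_def hfun_def Let_def ..

lemma hfun_meas[measurable]: "hfun \<rho> \<eta> \<in> borel_measurable (sum_meas \<rho> \<eta>)"
  unfolding hfun_def by measurable

lemma restr_sets[simp]: "sets (restr \<rho> E) = sets \<rho>" "space (restr \<rho> E) = space \<rho>"
  unfolding restr_def by auto

lemma restr_measure:
  assumes "E \<in> sets \<rho>"
  shows "measure (restr \<rho> E) (space (restr \<rho> E)) = measure \<rho> E"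
  unfolding restr_def measure_def using assms
  by (simp add: emeasure_restricted Int_absorb2 sets.sets_into_space)

lemma restr_emeasure:
  assumes "E \<in> sets \<rho>" "A \<in> sets \<rho>"
  shows "emeasure (restr \<rho> E) A = emeasure \<rho> (E \<inter> A)"
  unfolding restr_def using assms by (simp add: emeasure_restricted)

locale twomeas =
  fixes \<rho> \<eta> :: "'a measure"
  assumes finr: "finite_measure \<rho>" and fine: "finite_measure \<eta>" and seq: "sets \<eta> = sets \<rho>"
begin

abbreviation "m \<equiv> sum_meas \<rho> \<eta>"
abbreviation "f \<equiv> RN_deriv m \<rho>"
abbreviation "g \<equiv> RN_deriv m \<eta>"

lemma m_sets[simp]: "sets m = sets \<rho>" "space m = space \<rho>"
  using sum_meas_sets[OF seq] by auto

lemma m_fin: "finite_measure m"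
  using sum_meas_finite[OF seq finr fine] .

lemma dens_f: "density m f = \<rho>"
proof -
  interpret fm: finite_measure m by (rule m_fin)
  show ?thesis using sum_meas_ac[OF seq] by (intro fm.density_RN_deriv) auto
qed

lemma dens_g: "density m g = \<eta>"
proof -
  interpret fm: finite_measure m by (rule m_fin)
  show ?thesis using sum_meas_ac[OF seq] seq by (intro fm.density_RN_deriv) auto
qed

lemma restr_hell:
  assumes E: "E \<in> sets \<rho>"
  shows "hell_aff (restr \<rho> E) (restr \<eta> E) = enn2real (\<integral>\<^sup>+x. hfun \<rho> \<eta> x * indicator E x \<partial>m)"
proof -
  define mE where "mE = sum_meas (restr \<rho> E) (restr \<eta> E)"
  have Em: "E \<in> sets m" using E by simp
  have seqE: "sets (restr \<eta> E) = sets (restr \<rho> E)" using seq by simp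
  have mE: "mE = density m (indicator E)"
  proof (rule measure_eqI)
    show "sets mE = sets (density m (indicator E))"
      unfolding mE_def using sum_meas_sets[OF seqE] by simp
    fix A assume "A \<in> sets mE"
    then have A: "A \<in> sets \<rho>" unfolding mE_def using sum_meas_sets[OF seqE] by simp
    have "emeasure mE A = emeasure \<rho> (E \<inter> A) + emeasure \<eta> (E \<inter> A)"
      unfolding mE_def using sum_meas_emeasure[OF seqE] A E seq
      by (simp add: restr_emeasure)
    also have "\<dots> = emeasure m (E \<inter> A)"
      using sum_meas_emeasure[OF seq] A E by auto
    also have "\<dots> = emeasure (density m (indicator E)) A"
      using A Em by (simp add: emeasure_restricted)
    finally show "emeasure mE A = emeasure (density m (indicator E)) A" .
  qed
  have fmE: "finite_measure mE"
  proof (rule finite_measureI)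
    interpret fm: finite_measure m by (rule m_fin)
    have "emeasure mE (space mE) = emeasure m (E \<inter> space m)"
      unfolding mE using Em by (simp add: emeasure_restricted)
    then show "emeasure mE (space mE) \<noteq> \<infinity>"
      using fm.emeasure_finite by simp
  qed
  interpret fE: finite_measure mE by (rule fmE)
  have rf: "density mE f = restr \<rho> E"
  proof -
    have "restr \<rho> E = density (density m f) (indicator E)" unfolding restr_def dens_f ..
    also have "\<dots> = density m (\<lambda>x. f x * indicator E x)"
      using Em by (subst density_density_eq) (auto intro: borel_measurable_indicator[OF Em])
    finally show ?thesis unfolding mE
      by (subst density_density_eq) (auto simp: mult.commute intro: borel_measurable_indicator[OF Em])
  qed
  have rg: "density mE g = restr \<eta> E"
  proof -
    have "restr \<eta> E = density (density m g) (indicator E)" unfolding restr_def dens_g ..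
    also have "\<dots> = density m (\<lambda>x. g x * indicator E x)"
      using Em by (subst density_density_eq) (auto intro: borel_measurable_indicator[OF Em])
    finally show ?thesis unfolding mE
      by (subst density_density_eq) (auto simp: mult.commute intro: borel_measurable_indicator[OF Em])
  qed
  have aef: "AE x in mE. f x = RN_deriv mE (restr \<rho> E) x"
    by (rule fE.RN_deriv_unique[OF _ rf]) (simp add: mE)
  have aeg: "AE x in mE. g x = RN_deriv mE (restr \<eta> E) x"
    by (rule fE.RN_deriv_unique[OF _ rg]) (simp add: mE)
  have "hell_aff (restr \<rho> E) (restr \<eta> E) = enn2real (\<integral>\<^sup>+x. hfun \<rho> \<eta> x \<partial>mE)"
    unfolding hell_aff_hfun mE_def[symmetric]
    apply (rule arg_cong[where f=enn2real])
    apply (rule nn_integral_cong_AE)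
    using aef aeg unfolding hfun_def mE_def by eventually_elim auto
  also have "\<dots> = enn2real (\<integral>\<^sup>+x. indicator E x * hfun \<rho> \<eta> x \<partial>m)"
    unfolding mE using Em by (subst nn_integral_density) (auto intro: borel_measurable_indicator[OF Em])
  finally show ?thesis by (simp add: mult.commute)
qed


definition HE :: "'a set \<Rightarrow> real" where
  "HE E = enn2real (\<integral>\<^sup>+x. hfun \<rho> \<eta> x * indicator E x \<partial>m)"

lemma int_f: "(\<integral>\<^sup>+x. f x \<partial>m) = emeasure \<rho> (space \<rho>)"
proof -
  have "emeasure \<rho> (space \<rho>) = emeasure (density m f) (space m)" using dens_f by simp
  also have "\<dots> = (\<integral>\<^sup>+x. f x * indicator (space m) x \<partial>m)" by (simp add: emeasure_density)
  also have "\<dots> = (\<integral>\<^sup>+x. f x \<partial>m)" by (intro nn_integral_cong) (simp add: indicator_def)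
  finally show ?thesis ..
qed

lemma int_g: "(\<integral>\<^sup>+x. g x \<partial>m) = emeasure \<eta> (space \<eta>)"
proof -
  have "emeasure \<eta> (space \<eta>) = emeasure (density m g) (space m)" using dens_g sets_eq_imp_space_eq[OF seq] by simp
  also have "\<dots> = (\<integral>\<^sup>+x. g x * indicator (space m) x \<partial>m)" by (simp add: emeasure_density)
  also have "\<dots> = (\<integral>\<^sup>+x. g x \<partial>m)" by (intro nn_integral_cong) (simp add: indicator_def)
  finally show ?thesis ..
qed

lemma enn_le: "ennreal (enn2real x) \<le> x"
  by (cases x) auto

lemma h_le: "2 * hfun \<rho> \<eta> x \<le> f x + g x"
proof -
  define F where "F = enn2real (f x)"
  define G where "G = enn2real (g x)"
  have F: "F \<ge> 0" "G \<ge> 0" unfolding F_def G_def by auto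
  have "2 * sqrt (F * G) \<le> F + G"
  proof -
    have "0 \<le> (sqrt F - sqrt G)^2" by simp
    then show ?thesis using F by (simp add: power2_eq_square algebra_simps real_sqrt_mult)
  qed
  then have "ennreal (2 * sqrt (F * G)) \<le> ennreal (F + G)" by (rule ennreal_leI)
  then have "2 * hfun \<rho> \<eta> x \<le> ennreal F + ennreal G"
    unfolding hfun_def F_def[symmetric] G_def[symmetric]
    using F by (simp add: ennreal_mult)
  also have "\<dots> \<le> f x + g x" unfolding F_def G_def by (intro add_mono enn_le)
  finally show ?thesis .
qed

lemma int_h_le: "2 * (\<integral>\<^sup>+x. hfun \<rho> \<eta> x \<partial>m) \<le> emeasure \<rho> (space \<rho>) + emeasure \<eta> (space \<eta>)"
proof -
  have "2 * (\<integral>\<^sup>+x. hfun \<rho> \<eta> x \<partial>m) = (\<integral>\<^sup>+x. 2 * hfun \<rho> \<eta> x \<partial>m)"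
    by (simp add: nn_integral_cmult)
  also have "\<dots> \<le> (\<integral>\<^sup>+x. f x + g x \<partial>m)" by (intro nn_integral_mono h_le)
  also have "\<dots> = (\<integral>\<^sup>+x. f x \<partial>m) + (\<integral>\<^sup>+x. g x \<partial>m)" by (simp add: nn_integral_add)
  finally show ?thesis using int_f int_g by simp
qed

lemma int_h_fin: "(\<integral>\<^sup>+x. hfun \<rho> \<eta> x \<partial>m) < \<infinity>"
proof -
  have "emeasure \<rho> (space \<rho>) + emeasure \<eta> (space \<eta>) < \<infinity>"
    using finite_measure.emeasure_finite[OF finr] finite_measure.emeasure_finite[OF fine]
    by (simp add: less_top)
  then have "2 * (\<integral>\<^sup>+x. hfun \<rho> \<eta> x \<partial>m) < \<infinity>" using int_h_le by (rule le_less_trans[rotated])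
  then show ?thesis by (auto simp: ennreal_mult_less_top)
qed

lemma intE_fin: "(\<integral>\<^sup>+x. hfun \<rho> \<eta> x * indicator E x \<partial>m) < \<infinity>"
proof -
  have "(\<integral>\<^sup>+x. hfun \<rho> \<eta> x * indicator E x \<partial>m) \<le> (\<integral>\<^sup>+x. hfun \<rho> \<eta> x \<partial>m)"
    by (intro nn_integral_mono) (simp add: indicator_def)
  then show ?thesis using int_h_fin by (rule le_less_trans)
qed

lemma HE_nonneg: "HE E \<ge> 0" unfolding HE_def by simp

lemma HE_space: "HE (space \<rho>) = hell_aff \<rho> \<eta>"
  unfolding HE_def hell_aff_hfun
  by (intro arg_cong[where f=enn2real] nn_integral_cong) (simp add: indicator_def)

lemma HE_union:
  assumes "A \<in> sets \<rho>" "B \<in> sets \<rho>" "A \<inter> B = {}"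
  shows "HE (A \<union> B) = HE A + HE B"
proof -
  have "(\<integral>\<^sup>+x. hfun \<rho> \<eta> x * indicator (A \<union> B) x \<partial>m)
      = (\<integral>\<^sup>+x. hfun \<rho> \<eta> x * indicator A x + hfun \<rho> \<eta> x * indicator B x \<partial>m)"
    using assms(3) by (intro nn_integral_cong) (auto simp: indicator_def)
  also have "\<dots> = (\<integral>\<^sup>+x. hfun \<rho> \<eta> x * indicator A x \<partial>m) + (\<integral>\<^sup>+x. hfun \<rho> \<eta> x * indicator B x \<partial>m)"
  proof -
    have [measurable]: "A \<in> sets m" "B \<in> sets m" using assms by auto
    show ?thesis by (rule nn_integral_add; measurable)
  qed
  finally show ?thesis unfolding HE_def using intE_fin[of A] intE_fin[of B]
    by (simp add: enn2real_plus less_top)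
qed

lemma HE_le: "2 * hell_aff \<rho> \<eta> \<le> measure \<rho> (space \<rho>) + measure \<eta> (space \<eta>)"
proof -
  have "ennreal (2 * hell_aff \<rho> \<eta>) = 2 * (\<integral>\<^sup>+x. hfun \<rho> \<eta> x \<partial>m)"
    unfolding hell_aff_hfun using int_h_fin
    by (simp add: ennreal_mult less_top)
  also have "\<dots> \<le> emeasure \<rho> (space \<rho>) + emeasure \<eta> (space \<eta>)" by (rule int_h_le)
  also have "\<dots> = ennreal (measure \<rho> (space \<rho>) + measure \<eta> (space \<eta>))"
    using finite_measure.emeasure_eq_measure[OF finr] finite_measure.emeasure_eq_measure[OF fine]
    by (simp add: ennreal_plus)
  finally have "ennreal (2 * hell_aff \<rho> \<eta>) \<le> ennreal (measure \<rho> (space \<rho>) + measure \<eta> (space \<eta>))" .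
  then show ?thesis by (subst (asm) ennreal_le_iff) auto
qed

lemma HE_single:
  assumes "{c} \<in> sets \<rho>"
  shows "HE {c} = sqrt (measure \<rho> {c} * measure \<eta> {c})"
proof -
  have cm: "{c} \<in> sets m" using assms by simp
  have r: "emeasure \<rho> {c} = f c * emeasure m {c}"
  proof -
    have "emeasure \<rho> {c} = emeasure (density m f) {c}" using dens_f by simp
    also have "\<dots> = (\<integral>\<^sup>+x. f x * indicator {c} x \<partial>m)" using cm by (simp add: emeasure_density)
    also have "\<dots> = f c * emeasure m {c}" using cm by simp
    finally show ?thesis .
  qed
  have e: "emeasure \<eta> {c} = g c * emeasure m {c}"
  proof -
    have "emeasure \<eta> {c} = emeasure (density m g) {c}" using dens_g by simp
    also have "\<dots> = (\<integral>\<^sup>+x. g x * indicator {c} x \<partial>m)" using cm by (simp add: emeasure_density)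
    also have "\<dots> = g c * emeasure m {c}" using cm by simp
    finally show ?thesis .
  qed
  have fin: "emeasure m {c} < \<infinity>" using finite_measure.emeasure_finite[OF m_fin] by (simp add: less_top)
  define M where "M = enn2real (emeasure m {c})"
  have M: "M \<ge> 0" unfolding M_def by simp
  have "HE {c} = enn2real (hfun \<rho> \<eta> c * emeasure m {c})"
    unfolding HE_def by (subst nn_integral_indicator_singleton[OF cm]) (rule refl)
  also have "\<dots> = sqrt (enn2real (f c) * enn2real (g c)) * M"
    unfolding hfun_def M_def by (simp add: enn2real_mult)
  also have "\<dots> = sqrt ((enn2real (f c) * M) * (enn2real (g c) * M))"
  proof -
    have "(enn2real (f c) * M) * (enn2real (g c) * M) = (enn2real (f c) * enn2real (g c)) * M\<^sup>2"
      by (simp add: power2_eq_square)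
    then show ?thesis using M by (simp only: real_sqrt_mult real_sqrt_abs abs_of_nonneg)
  qed
  also have "\<dots> = sqrt (measure \<rho> {c} * measure \<eta> {c})"
    unfolding measure_def r e M_def by (simp add: enn2real_mult)
  finally show ?thesis .
qed


lemma sqrt_aux:
  fixes a b :: real assumes "a \<ge> 0" "b \<ge> 0"
  shows "a + b - 2 * sqrt (a * b) \<le> \<bar>a - b\<bar>"
proof -
  define x where "x = sqrt a"
  define y where "y = sqrt b"
  have xy: "x \<ge> 0" "y \<ge> 0" unfolding x_def y_def using assms by auto
  have a: "a = x * x" "b = y * y" unfolding x_def y_def using assms by auto
  have s: "sqrt (a * b) = x * y" unfolding x_def y_def by (simp add: real_sqrt_mult)
  have "\<bar>x - y\<bar> \<le> x + y" using xy by arith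
  then have "\<bar>x - y\<bar> * \<bar>x - y\<bar> \<le> (x + y) * \<bar>x - y\<bar>" by (rule mult_right_mono) simp
  also have "\<dots> = \<bar>(x + y) * (x - y)\<bar>" using xy by (simp add: abs_mult)
  also have "(x + y) * (x - y) = a - b" unfolding a by (simp add: algebra_simps)
  finally have "\<bar>x - y\<bar> * \<bar>x - y\<bar> \<le> \<bar>a - b\<bar>" .
  moreover have "\<bar>x - y\<bar> * \<bar>x - y\<bar> = x * x + y * y - 2 * (x * y)"
    by (simp add: algebra_simps)
  ultimately show ?thesis using s a by simp
qed

lemma core:
  assumes pr: "measure \<rho> (space \<rho>) = 1" "measure \<eta> (space \<eta>) = 1"
    and S: "{c} \<in> sets \<rho>" "E10 \<in> sets \<rho>" "E01 \<in> sets \<rho>" "E11 \<in> sets \<rho>"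
    and D: "c \<notin> E10" "c \<notin> E01" "c \<notin> E11" "E10 \<inter> E01 = {}" "E10 \<inter> E11 = {}" "E01 \<inter> E11 = {}"
    and C: "space \<rho> = {c} \<union> E10 \<union> E01 \<union> E11"
  shows "\<bar>1 - hell_aff \<rho> \<eta>\<bar> \<le> \<bar>measure \<rho> {c} - measure \<eta> {c}\<bar> + measure \<rho> E11 + measure \<eta> E11
          + \<bar>hell_sq (restr \<rho> E10) (restr \<eta> E10)\<bar> + \<bar>hell_sq (restr \<rho> E01) (restr \<eta> E01)\<bar>"
proof -
  interpret fr: finite_measure \<rho> by (rule finr)
  interpret fe: finite_measure \<eta> by (rule fine)
  have spe: "space \<eta> = space \<rho>" using sets_eq_imp_space_eq[OF seq] .
  have S': "{c} \<in> sets \<eta>" "E10 \<in> sets \<eta>" "E01 \<in> sets \<eta>" "E11 \<in> sets \<eta>" using S seq by auto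
  have D1: "{c} \<inter> E10 = {}" "({c} \<union> E10) \<inter> E01 = {}" "({c} \<union> E10 \<union> E01) \<inter> E11 = {}"
    using D by auto
  have U: "{c} \<union> E10 \<in> sets \<rho>" "{c} \<union> E10 \<union> E01 \<in> sets \<rho>" using S by (meson sets.Un)+
  have U': "{c} \<union> E10 \<in> sets \<eta>" "{c} \<union> E10 \<union> E01 \<in> sets \<eta>" using U seq by auto
  have H: "hell_aff \<rho> \<eta> = HE {c} + HE E10 + HE E01 + HE E11"
  proof -
    have "HE ({c} \<union> E10 \<union> E01 \<union> E11) = HE ({c} \<union> E10 \<union> E01) + HE E11"
      by (rule HE_union[OF U(2) S(4) D1(3)])
    also have "HE ({c} \<union> E10 \<union> E01) = HE ({c} \<union> E10) + HE E01"
      by (rule HE_union[OF U(1) S(3) D1(2)])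
    also have "HE ({c} \<union> E10) = HE {c} + HE E10"
      by (rule HE_union[OF S(1) S(2) D1(1)])
    finally show ?thesis unfolding HE_space[symmetric] C .
  qed
  have MR: "measure \<rho> (space \<rho>) = measure \<rho> {c} + measure \<rho> E10 + measure \<rho> E01 + measure \<rho> E11"
    unfolding C using fr.finite_measure_Union[OF U(2) S(4) D1(3)] fr.finite_measure_Union[OF U(1) S(3) D1(2)]
      fr.finite_measure_Union[OF S(1) S(2) D1(1)] by simp
  have ME: "measure \<eta> (space \<eta>) = measure \<eta> {c} + measure \<eta> E10 + measure \<eta> E01 + measure \<eta> E11"
    unfolding spe C using fe.finite_measure_Union[OF U'(2) S'(4) D1(3)] fe.finite_measure_Union[OF U'(1) S'(3) D1(2)]
      fe.finite_measure_Union[OF S'(1) S'(2) D1(1)] by simp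
  have hs: "hell_sq (restr \<rho> E) (restr \<eta> E) = measure \<rho> E + measure \<eta> E - 2 * HE E" if "E \<in> sets \<rho>" for E
    using restr_measure[of E \<rho>] restr_measure[of E \<eta>] restr_hell[OF that] that seq
    unfolding hell_sq_def HE_def by simp
  have hc: "HE {c} = sqrt (measure \<rho> {c} * measure \<eta> {c})" using HE_single[OF S(1)] .
  have le1: "hell_aff \<rho> \<eta> \<le> 1" using HE_le pr by simp
  have sq: "measure \<rho> {c} + measure \<eta> {c} - 2 * sqrt (measure \<rho> {c} * measure \<eta> {c})
      \<le> \<bar>measure \<rho> {c} - measure \<eta> {c}\<bar>" by (rule sqrt_aux) auto
  have "HE E11 \<ge> 0" by (rule HE_nonneg)
  moreover have "measure \<rho> E11 \<ge> 0" "measure \<eta> E11 \<ge> 0" by auto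
  ultimately show ?thesis using H MR ME hs[OF S(2)] hs[OF S(3)] hc le1 sq pr
    using abs_ge_self[of "hell_sq (restr \<rho> E10) (restr \<eta> E10)"] abs_ge_self[of "hell_sq (restr \<rho> E01) (restr \<eta> E01)"]
      abs_of_nonneg[of "1 - hell_aff \<rho> \<eta>"]
    by linarith
qed
end



definition miss :: "real \<Rightarrow> real set \<Rightarrow> real set set" where
  "miss x K = {Z \<in> Cspace x. Z \<inter> K = {}}"

lemma miss_in: "compact K \<Longrightarrow> miss x K \<in> sets (Cmeas x)"
  unfolding miss_def by (rule miss_sets)

lemma Cspace_sets: "Cspace x \<in> sets (Cmeas x)"
  using sets.top[of "Cmeas x"] by (simp add: space_Cmeas)

lemma compl_in: "compact K \<Longrightarrow> Cspace x - miss x K \<in> sets (Cmeas x)"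
  using Cspace_sets miss_in by blast

lemma empty_Cspace: "x \<ge> 0 \<Longrightarrow> {} \<in> Cspace x"
  unfolding Cspace_def by auto

lemma single_empty: "x \<ge> 0 \<Longrightarrow> {{}} \<in> sets (Cmeas x)"
proof -
  assume x: "x \<ge> 0"
  have "{{}} = miss x {0..x}" unfolding miss_def Cspace_def using x by auto
  then show ?thesis using miss_in[of "{0..x}" x] by simp
qed

lemma fam_basic:
  assumes "measurable_factorizing_family \<nu>" "x > 0"
  shows "prob_space (\<nu> x)" "sets (\<nu> x) = sets (Cmeas x)" "space (\<nu> x) = Cspace x"
  using assms unfolding measurable_factorizing_family_def by (auto simp: space_Cmeas)

lemma fam_point:
  assumes "measurable_factorizing_family \<nu>" "x > 0" "r \<in> {0..x}"
  shows "emeasure (\<nu> x) {Z \<in> space (\<nu> x). r \<in> Z} = 0"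
  using assms unfolding measurable_factorizing_family_def by auto

lemma fam_ac:
  assumes "measurable_factorizing_family \<nu>" "a > 0" "b > 0"
  shows "absolutely_continuous (conv_meas \<nu> a b) (\<nu> (a + b))"
  using assms unfolding measurable_factorizing_family_def by auto

lemma oplus_space:
  assumes "a \<ge> 0" "b \<ge> 0" "Z1 \<in> Cspace a" "Z2 \<in> Cspace b"
  shows "oplus a b (Z1, Z2) \<in> Cspace (a + b)"
proof -
  have "closed ((+) a ` Z2)" using assms(4) unfolding Cspace_def by (auto intro: closed_translation)
  moreover have "(\<lambda>r. a + r) ` Z2 = (+) a ` Z2" by auto
  ultimately show ?thesis using assms unfolding Cspace_def oplus_def by (auto intro!: closed_Un)
qed

locale convctx =
  fixes \<nu> :: "real \<Rightarrow> real set measure" and a b :: real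
  assumes fam: "measurable_factorizing_family \<nu>" and a: "a > 0" and b: "b > 0"
begin

abbreviation "M \<equiv> \<nu> a \<Otimes>\<^sub>M \<nu> b"
abbreviation "\<sigma> \<equiv> conv_meas \<nu> a b"

lemma pa: "prob_space (\<nu> a)" and pb: "prob_space (\<nu> b)" and pc: "prob_space (\<nu> (a + b))"
  using fam_basic[OF fam] a b by auto

lemma spaceM: "space M = Cspace a \<times> Cspace b"
  using fam_basic[OF fam] a b by (simp add: space_pair_measure)

lemma sigma_sets[simp]: "sets \<sigma> = sets (Cmeas (a + b))" "space \<sigma> = Cspace (a + b)"
  unfolding conv_meas_def by (auto simp: space_Cmeas)

lemma Times_M: "A \<in> sets (\<nu> a) \<Longrightarrow> B \<in> sets (\<nu> b) \<Longrightarrow> emeasure M (A \<times> B) = emeasure (\<nu> a) A * emeasure (\<nu> b) B"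
proof -
  interpret pb': prob_space "\<nu> b" by (rule pb)
  show "A \<in> sets (\<nu> a) \<Longrightarrow> B \<in> sets (\<nu> b) \<Longrightarrow> ?thesis" by (rule pb'.emeasure_pair_measure_Times)
qed

lemma sigma_emeasure:
  assumes A: "A \<in> sets (Cmeas (a + b))"
  shows "emeasure \<sigma> A = emeasure M (oplus a b -` A \<inter> space M)"
proof -
  let ?\<mu> = "\<lambda>A. emeasure M (oplus a b -` A \<inter> space M)"
  have ss: "sigma_sets (space (Cmeas (a + b))) (sets (Cmeas (a + b))) = sets (Cmeas (a + b))"
    by (rule sets.sigma_sets_eq)
  show ?thesis
  proof (cases "measure_space (space (Cmeas (a + b))) (sets (Cmeas (a + b))) ?\<mu>")
    case True
    then show ?thesis unfolding conv_meas_def distr_def emeasure_measure_of_conv ss using A by simp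
  next
    case False
    then have z: "emeasure \<sigma> X = 0" for X
      unfolding conv_meas_def distr_def emeasure_measure_of_conv ss by simp
    have "space (Cmeas (a + b)) \<in> null_sets \<sigma>" using z by (auto simp: null_sets_def space_Cmeas Cspace_sets)
    then have "space (Cmeas (a + b)) \<in> null_sets (\<nu> (a + b))"
      using fam_ac[OF fam a b] unfolding absolutely_continuous_def by auto
    moreover have "space (Cmeas (a + b)) = space (\<nu> (a + b))" using fam_basic[OF fam] a b by (simp add: space_Cmeas)
    ultimately have "emeasure (\<nu> (a + b)) (space (\<nu> (a + b))) = 0" by auto
    then show ?thesis using prob_space.emeasure_space_1[OF pc] by simp
  qed
qed

lemma sigma_space1: "emeasure \<sigma> (space \<sigma>) = 1"
proof -
  have "oplus a b -` Cspace (a + b) \<inter> space M = space M"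
    using oplus_space a b unfolding spaceM by auto
  then have "emeasure \<sigma> (space \<sigma>) = emeasure M (space (\<nu> a) \<times> space (\<nu> b))"
    using sigma_emeasure[OF Cspace_sets[of "a+b"]] fam_basic[OF fam] a b spaceM by simp
  also have "\<dots> = 1" using Times_M[OF sets.top sets.top] prob_space.emeasure_space_1[OF pa]
      prob_space.emeasure_space_1[OF pb] by simp
  finally show ?thesis .
qed

lemma sigma_prob: "prob_space \<sigma>"
  by (rule prob_spaceI) (rule sigma_space1)

lemma sigma_empty: "emeasure \<sigma> {{}} = emeasure (\<nu> a) {{}} * emeasure (\<nu> b) {{}}"
proof -
  have "oplus a b -` {{}} \<inter> space M = {{}} \<times> {{}}"
    using empty_Cspace a b unfolding spaceM oplus_def by auto
  moreover have "emeasure M ({{}} \<times> {{}}) = emeasure (\<nu> a) {{}} * emeasure (\<nu> b) {{}}"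
    by (rule Times_M) (use single_empty[of a] single_empty[of b] fam_basic[OF fam] a b in auto)
  ultimately show ?thesis using sigma_emeasure[OF single_empty[of "a+b"]] a b by simp
qed


lemma hit_eq: "{Z \<in> Cspace x. Z \<inter> K \<noteq> {}} = Cspace x - miss x K"
  unfolding miss_def by auto

lemma hit_in: "compact K \<Longrightarrow> {Z \<in> Cspace x. Z \<inter> K \<noteq> {}} \<in> sets (Cmeas x)"
  unfolding hit_eq by (rule compl_in)

lemma miss_in': "compact K \<Longrightarrow> {Z \<in> Cspace x. Z \<inter> K = {}} \<in> sets (Cmeas x)"
  by (rule miss_sets)

lemma nonempty_in: "x \<ge> 0 \<Longrightarrow> {Z \<in> Cspace x. Z \<noteq> {}} \<in> sets (Cmeas x)"
proof -
  assume x: "x \<ge> 0"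
  have "{Z \<in> Cspace x. Z \<noteq> {}} = {Z \<in> Cspace x. Z \<inter> {0..x} \<noteq> {}}"
    unfolding Cspace_def by auto
  then show ?thesis using hit_in[of "{0..x}" x] by simp
qed

lemma point_in: "{Z \<in> Cspace x. r \<in> Z} \<in> sets (Cmeas x)"
proof -
  have "{Z \<in> Cspace x. r \<in> Z} = {Z \<in> Cspace x. Z \<inter> {r} \<noteq> {}}" by auto
  then show ?thesis using hit_in[of "{r}" x] by simp
qed

lemma sigma_E11:
  "emeasure \<sigma> {Z \<in> Cspace (a + b). Z \<inter> {0..a} \<noteq> {} \<and> Z \<inter> {a..a + b} \<noteq> {}}
    \<le> emeasure (\<nu> a) {Z \<in> Cspace a. Z \<noteq> {}} * emeasure (\<nu> b) {Z \<in> Cspace b. Z \<noteq> {}}"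
proof -
  define E where "E = {Z \<in> Cspace (a + b). Z \<inter> {0..a} \<noteq> {} \<and> Z \<inter> {a..a + b} \<noteq> {}}"
  define NA where "NA = {Z \<in> Cspace a. Z \<noteq> {}}"
  define NB where "NB = {Z \<in> Cspace b. Z \<noteq> {}}"
  define PA where "PA = {Z \<in> Cspace a. a \<in> Z}"
  define PB where "PB = {Z \<in> Cspace b. 0 \<in> Z}"
  have sa: "sets (\<nu> a) = sets (Cmeas a)" "space (\<nu> a) = Cspace a" using fam_basic[OF fam] a by auto
  have sb: "sets (\<nu> b) = sets (Cmeas b)" "space (\<nu> b) = Cspace b" using fam_basic[OF fam] b by auto
  have ms: "NA \<in> sets (\<nu> a)" "PA \<in> sets (\<nu> a)" "Cspace a \<in> sets (\<nu> a)"
     "NB \<in> sets (\<nu> b)" "PB \<in> sets (\<nu> b)" "Cspace b \<in> sets (\<nu> b)"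
    unfolding NA_def NB_def PA_def PB_def sa sb using a b
    by (auto intro: nonempty_in point_in Cspace_sets)
  have Ein: "E \<in> sets (Cmeas (a + b))"
  proof -
    have "E = {Z \<in> Cspace (a + b). Z \<inter> {0..a} \<noteq> {}} \<inter> {Z \<in> Cspace (a + b). Z \<inter> {a..a + b} \<noteq> {}}"
      unfolding E_def by auto
    then show ?thesis using hit_in[of "{0..a}" "a+b"] hit_in[of "{a..a+b}" "a+b"] by auto
  qed
  have sub: "oplus a b -` E \<inter> space M \<subseteq> (NA \<times> NB \<union> PA \<times> Cspace b) \<union> Cspace a \<times> PB"
  proof
    fix p assume p: "p \<in> oplus a b -` E \<inter> space M"
    obtain Z1 Z2 where pz: "p = (Z1, Z2)" by (cases p)
    have Z1: "Z1 \<in> Cspace a" and Z2: "Z2 \<in> Cspace b" using p pz spaceM by auto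
    have h1: "(Z1 \<union> (\<lambda>r. a + r) ` Z2) \<inter> {0..a} \<noteq> {}" and h2: "(Z1 \<union> (\<lambda>r. a + r) ` Z2) \<inter> {a..a + b} \<noteq> {}"
      using p pz unfolding E_def oplus_def by auto
    have Z1s: "Z1 \<subseteq> {0..a}" and Z2s: "Z2 \<subseteq> {0..b}" using Z1 Z2 unfolding Cspace_def by auto
    show "p \<in> (NA \<times> NB \<union> PA \<times> Cspace b) \<union> Cspace a \<times> PB"
    proof (cases "Z1 = {}")
      case True
      then obtain r where "r \<in> Z2" "a + r \<le> a" using h1 by auto
      then have "0 \<in> Z2" using Z2s by (metis atLeastAtMost_iff add_le_same_cancel1 antisym subsetD)
      then show ?thesis using pz Z1 Z2 unfolding PB_def by auto
    next
      case False
      show ?thesis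
      proof (cases "Z2 = {}")
        case True
        then obtain r where "r \<in> Z1" "a \<le> r" using h2 by auto
        then have "a \<in> Z1" using Z1s by (metis atLeastAtMost_iff antisym subsetD)
        then show ?thesis using pz Z1 Z2 unfolding PA_def by auto
      next
        case F2: False
        then show ?thesis using False pz Z1 Z2 unfolding NA_def NB_def by auto
      qed
    qed
  qed
  have mM: "NA \<times> NB \<in> sets M" "PA \<times> Cspace b \<in> sets M" "Cspace a \<times> PB \<in> sets M"
    using ms by auto
  have "emeasure \<sigma> E = emeasure M (oplus a b -` E \<inter> space M)" by (rule sigma_emeasure[OF Ein])
  also have "\<dots> \<le> emeasure M ((NA \<times> NB \<union> PA \<times> Cspace b) \<union> Cspace a \<times> PB)"
    by (rule emeasure_mono[OF sub]) (use mM in auto)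
  also have "\<dots> \<le> emeasure M (NA \<times> NB \<union> PA \<times> Cspace b) + emeasure M (Cspace a \<times> PB)"
    by (rule emeasure_subadditive) (use mM in auto)
  also have "\<dots> \<le> emeasure M (NA \<times> NB) + emeasure M (PA \<times> Cspace b) + emeasure M (Cspace a \<times> PB)"
    by (intro add_mono emeasure_subadditive) (use mM in auto)
  also have "emeasure M (PA \<times> Cspace b) = 0"
    using Times_M[OF ms(2) ms(6)] fam_point[OF fam a, of a] a sa unfolding PA_def by simp
  also have "emeasure M (Cspace a \<times> PB) = 0"
    using Times_M[OF ms(3) ms(5)] fam_point[OF fam b, of 0] b sb unfolding PB_def by simp
  also have "emeasure M (NA \<times> NB) = emeasure (\<nu> a) NA * emeasure (\<nu> b) NB"
    by (rule Times_M[OF ms(1) ms(4)])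
  finally show ?thesis unfolding E_def NA_def NB_def by simp
qed

lemma pointwise:
  defines "S \<equiv> space (\<nu> (a + b))"
  shows "\<bar>1 - hell_aff (\<nu> (a + b)) \<sigma>\<bar> \<le>
     \<bar>measure (\<nu> (a + b)) {{}} - measure (\<nu> a) {{}} * measure (\<nu> b) {{}}\<bar>
   + measure (\<nu> (a + b)) {Z \<in> S. Z \<inter> {0..a} \<noteq> {} \<and> Z \<inter> {a..a + b} \<noteq> {}}
   + measure (\<nu> a) {Z \<in> space (\<nu> a). Z \<noteq> {}} * measure (\<nu> b) {Z \<in> space (\<nu> b). Z \<noteq> {}}
   + \<bar>hell_sq (restr (\<nu> (a + b)) {Z \<in> S. Z \<inter> {0..a} \<noteq> {} \<and> Z \<inter> {a..a + b} = {}})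
              (restr \<sigma> {Z \<in> S. Z \<inter> {0..a} \<noteq> {} \<and> Z \<inter> {a..a + b} = {}})\<bar>
   + \<bar>hell_sq (restr (\<nu> (a + b)) {Z \<in> S. Z \<inter> {0..a} = {} \<and> Z \<inter> {a..a + b} \<noteq> {}})
              (restr \<sigma> {Z \<in> S. Z \<inter> {0..a} = {} \<and> Z \<inter> {a..a + b} \<noteq> {}})\<bar>"
proof -
  let ?N = "\<nu> (a + b)"
  define E10 where "E10 = {Z \<in> S. Z \<inter> {0..a} \<noteq> {} \<and> Z \<inter> {a..a + b} = {}}"
  define E01 where "E01 = {Z \<in> S. Z \<inter> {0..a} = {} \<and> Z \<inter> {a..a + b} \<noteq> {}}"
  define E11 where "E11 = {Z \<in> S. Z \<inter> {0..a} \<noteq> {} \<and> Z \<inter> {a..a + b} \<noteq> {}}"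
  have ab: "a + b > 0" using a b by simp
  have sN: "sets ?N = sets (Cmeas (a + b))" and S: "S = Cspace (a + b)"
    using fam_basic[OF fam ab] unfolding S_def by auto
  have sa: "space (\<nu> a) = Cspace a" and sb: "space (\<nu> b) = Cspace b"
    using fam_basic[OF fam] a b by auto
  interpret pN: prob_space ?N using pc .
  interpret pS: prob_space \<sigma> by (rule sigma_prob)
  interpret tm: twomeas ?N \<sigma>
    by unfold_locales (auto simp: sN)
  have K: "compact {0..a}" "compact {a..a+b}" by auto
  have in10: "E10 \<in> sets ?N"
  proof -
    have "E10 = {Z \<in> Cspace (a + b). Z \<inter> {0..a} \<noteq> {}} \<inter> {Z \<in> Cspace (a + b). Z \<inter> {a..a + b} = {}}"
      unfolding E10_def S by auto
    then show ?thesis using hit_in[OF K(1), of "a+b"] miss_in'[OF K(2), of "a+b"] sN by auto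
  qed
  have in01: "E01 \<in> sets ?N"
  proof -
    have "E01 = {Z \<in> Cspace (a + b). Z \<inter> {0..a} = {}} \<inter> {Z \<in> Cspace (a + b). Z \<inter> {a..a + b} \<noteq> {}}"
      unfolding E01_def S by auto
    then show ?thesis using miss_in'[OF K(1), of "a+b"] hit_in[OF K(2), of "a+b"] sN by auto
  qed
  have in11: "E11 \<in> sets ?N"
  proof -
    have "E11 = {Z \<in> Cspace (a + b). Z \<inter> {0..a} \<noteq> {}} \<inter> {Z \<in> Cspace (a + b). Z \<inter> {a..a + b} \<noteq> {}}"
      unfolding E11_def S by auto
    then show ?thesis using hit_in[OF K(1), of "a+b"] hit_in[OF K(2), of "a+b"] sN by auto
  qed
  have in0: "{{}} \<in> sets ?N" using single_empty[of "a+b"] ab sN by simp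
  have cover: "space ?N = {{}} \<union> E10 \<union> E01 \<union> E11"
  proof (intro equalityI subsetI)
    fix Z assume Z: "Z \<in> space ?N"
    show "Z \<in> {{}} \<union> E10 \<union> E01 \<union> E11"
    proof (cases "Z = {}")
      case False
      then obtain r where r: "r \<in> Z" by auto
      have "r \<in> {0..a+b}" using Z r S unfolding S_def Cspace_def by auto
      then have "r \<in> {0..a} \<or> r \<in> {a..a+b}" by auto
      then have "Z \<inter> {0..a} \<noteq> {} \<or> Z \<inter> {a..a + b} \<noteq> {}" using r by auto
      then show ?thesis using Z unfolding E10_def E01_def E11_def S_def by auto
    qed simp
  next
    fix Z assume "Z \<in> {{}} \<union> E10 \<union> E01 \<union> E11"
    then show "Z \<in> space ?N" using empty_Cspace[of "a+b"] ab S unfolding E10_def E01_def E11_def S_def by auto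
  qed
  have core: "\<bar>1 - hell_aff ?N \<sigma>\<bar> \<le> \<bar>measure ?N {{}} - measure \<sigma> {{}}\<bar> + measure ?N E11 + measure \<sigma> E11
          + \<bar>hell_sq (restr ?N E10) (restr \<sigma> E10)\<bar> + \<bar>hell_sq (restr ?N E01) (restr \<sigma> E01)\<bar>"
    by (rule tm.core) (use pN.prob_space pS.prob_space in0 in10 in01 in11 cover in \<open>auto simp: E10_def E01_def E11_def\<close>)
  have m0: "measure \<sigma> {{}} = measure (\<nu> a) {{}} * measure (\<nu> b) {{}}"
    unfolding measure_def sigma_empty by (simp add: enn2real_mult)
  have m11: "measure \<sigma> E11 \<le> measure (\<nu> a) {Z \<in> space (\<nu> a). Z \<noteq> {}} * measure (\<nu> b) {Z \<in> space (\<nu> b). Z \<noteq> {}}"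
  proof -
    interpret pa': prob_space "\<nu> a" by (rule pa)
    interpret pb': prob_space "\<nu> b" by (rule pb)
    have "ennreal (measure \<sigma> E11) = emeasure \<sigma> E11" by (simp add: pS.emeasure_eq_measure)
    also have "\<dots> \<le> emeasure (\<nu> a) {Z \<in> Cspace a. Z \<noteq> {}} * emeasure (\<nu> b) {Z \<in> Cspace b. Z \<noteq> {}}"
      unfolding E11_def S by (rule sigma_E11)
    also have "\<dots> = ennreal (measure (\<nu> a) {Z \<in> space (\<nu> a). Z \<noteq> {}} * measure (\<nu> b) {Z \<in> space (\<nu> b). Z \<noteq> {}})"
      unfolding sa sb by (simp add: pa'.emeasure_eq_measure pb'.emeasure_eq_measure ennreal_mult)
    finally show ?thesis by (subst (asm) ennreal_le_iff) auto
  qed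
  show ?thesis using core m0 m11 unfolding E10_def E01_def E11_def by linarith
qed
end


theorem proposition4p23:
  fixes \<nu> :: "real \<Rightarrow> real set measure" and s t :: real
  assumes fam: "measurable_factorizing_family \<nu>"
    and s: "s > 0" and t: "t > 0"
    and i0: "(\<lambda>l. measure (\<nu> (l * (s + t))) {Z \<in> space (\<nu> (l * (s + t))). Z \<noteq> {}})
               \<in> O[at_right 0](\<lambda>l. l * (s + t))"
    and i1: "(\<lambda>l. measure (\<nu> (l * s)) {Z \<in> space (\<nu> (l * s)). Z \<noteq> {}})
               \<in> O[at_right 0](\<lambda>l. l * s)"
    and i2: "(\<lambda>l. measure (\<nu> (l * t)) {Z \<in> space (\<nu> (l * t)). Z \<noteq> {}})
               \<in> O[at_right 0](\<lambda>l. l * t)"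
    and ii: "(\<lambda>l. measure (\<nu> (l * (s + t)))
                {Z \<in> space (\<nu> (l * (s + t))). Z \<inter> {0..l * s} \<noteq> {} \<and> Z \<inter> {l * s..l * (s + t)} \<noteq> {}})
               \<in> O[at_right 0](\<lambda>l. (l * (s + t))\<^sup>2)"
    and iii: "(\<lambda>l. \<bar>measure (\<nu> (l * (s + t))) {{}}
                     - measure (\<nu> (l * s)) {{}} * measure (\<nu> (l * t)) {{}}\<bar>)
               \<in> O[at_right 0](\<lambda>l. (l * (s + t))\<^sup>2)"
    and iv10: "(\<lambda>l. hell_sq
                  (restr (\<nu> (l * (s + t)))
                     {Z \<in> space (\<nu> (l * (s + t))). Z \<inter> {0..l * s} \<noteq> {} \<and> Z \<inter> {l * s..l * (s + t)} = {}})
                  (restr (conv_meas \<nu> (l * s) (l * t))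
                     {Z \<in> space (\<nu> (l * (s + t))). Z \<inter> {0..l * s} \<noteq> {} \<and> Z \<inter> {l * s..l * (s + t)} = {}}))
               \<in> O[at_right 0](\<lambda>l. (l * (s + t))\<^sup>2)"
    and iv01: "(\<lambda>l. hell_sq
                  (restr (\<nu> (l * (s + t)))
                     {Z \<in> space (\<nu> (l * (s + t))). Z \<inter> {0..l * s} = {} \<and> Z \<inter> {l * s..l * (s + t)} \<noteq> {}})
                  (restr (conv_meas \<nu> (l * s) (l * t))
                     {Z \<in> space (\<nu> (l * (s + t))). Z \<inter> {0..l * s} = {} \<and> Z \<inter> {l * s..l * (s + t)} \<noteq> {}}))
               \<in> O[at_right 0](\<lambda>l. (l * (s + t))\<^sup>2)"
  shows "(\<lambda>l. 1 - hell_aff (\<nu> (l * (s + t))) (conv_meas \<nu> (l * s) (l * t)))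
           \<in> O[at_right 0](\<lambda>l. (l * (s + t))\<^sup>2)"
  proof -
  define h where "h = (\<lambda>l::real. (l * (s + t))\<^sup>2)"
  define g0 where "g0 = (\<lambda>l. \<bar>measure (\<nu> (l * (s + t))) {{}}
                     - measure (\<nu> (l * s)) {{}} * measure (\<nu> (l * t)) {{}}\<bar>)"
  define g11 where "g11 = (\<lambda>l. measure (\<nu> (l * (s + t)))
                {Z \<in> space (\<nu> (l * (s + t))). Z \<inter> {0..l * s} \<noteq> {} \<and> Z \<inter> {l * s..l * (s + t)} \<noteq> {}})"
  define P1 where "P1 = (\<lambda>l. measure (\<nu> (l * s)) {Z \<in> space (\<nu> (l * s)). Z \<noteq> {}})"
  define P2 where "P2 = (\<lambda>l. measure (\<nu> (l * t)) {Z \<in> space (\<nu> (l * t)). Z \<noteq> {}})"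
  define g10 where "g10 = (\<lambda>l. hell_sq
                  (restr (\<nu> (l * (s + t)))
                     {Z \<in> space (\<nu> (l * (s + t))). Z \<inter> {0..l * s} \<noteq> {} \<and> Z \<inter> {l * s..l * (s + t)} = {}})
                  (restr (conv_meas \<nu> (l * s) (l * t))
                     {Z \<in> space (\<nu> (l * (s + t))). Z \<inter> {0..l * s} \<noteq> {} \<and> Z \<inter> {l * s..l * (s + t)} = {}}))"
  define g01 where "g01 = (\<lambda>l. hell_sq
                  (restr (\<nu> (l * (s + t)))
                     {Z \<in> space (\<nu> (l * (s + t))). Z \<inter> {0..l * s} = {} \<and> Z \<inter> {l * s..l * (s + t)} \<noteq> {}})
                  (restr (conv_meas \<nu> (l * s) (l * t))
                     {Z \<in> space (\<nu> (l * (s + t))). Z \<inter> {0..l * s} = {} \<and> Z \<inter> {l * s..l * (s + t)} \<noteq> {}}))"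
  define R where "R = (\<lambda>l. g0 l + g11 l + P1 l * P2 l + \<bar>g10 l\<bar> + \<bar>g01 l\<bar>)"
  have bound: "\<bar>1 - hell_aff (\<nu> (l * (s + t))) (conv_meas \<nu> (l * s) (l * t))\<bar> \<le> R l" if l: "l > 0" for l
  proof -
    interpret cc: convctx \<nu> "l * s" "l * t"
      by unfold_locales (use fam s t l in auto)
    have eq: "l * s + l * t = l * (s + t)" by (simp add: distrib_left)
    show ?thesis using cc.pointwise unfolding eq R_def g0_def g11_def P1_def P2_def g10_def g01_def
      by simp
  qed
  have o0: "g0 \<in> O[at_right 0](h)" using iii unfolding g0_def h_def .
  have o11: "g11 \<in> O[at_right 0](h)" using ii unfolding g11_def h_def .
  have o10: "(\<lambda>l. \<bar>g10 l\<bar>) \<in> O[at_right 0](h)" using iv10 unfolding g10_def h_def by simp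
  have o01: "(\<lambda>l. \<bar>g01 l\<bar>) \<in> O[at_right 0](h)" using iv01 unfolding g01_def h_def by simp
  have oP: "(\<lambda>l. P1 l * P2 l) \<in> O[at_right 0](h)"
  proof -
    have "(\<lambda>l. P1 l * P2 l) \<in> O[at_right 0](\<lambda>l. (l * s) * (l * t))"
      using landau_o.big_mult[OF i1 i2] unfolding P1_def P2_def .
    moreover have "(\<lambda>l. (l * s) * (l * t)) \<in> O[at_right 0](h)"
    proof (rule bigoI[where c=1], rule always_eventually, rule allI)
      fix l :: real
      have "\<bar>(l * s) * (l * t)\<bar> = l\<^sup>2 * (s * t)" using s t by (simp add: abs_mult power2_eq_square)
      also have "\<dots> \<le> l\<^sup>2 * (s + t)\<^sup>2"
        using s t by (intro mult_left_mono) (auto simp: power2_eq_square algebra_simps)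
      also have "\<dots> = \<bar>h l\<bar>" unfolding h_def by (simp add: power_mult_distrib)
      finally show "norm ((l * s) * (l * t)) \<le> 1 * norm (h l)" by simp
    qed
    ultimately show ?thesis by (rule landau_o.big_trans)
  qed
  have oR: "R \<in> O[at_right 0](h)"
    unfolding R_def by (intro sum_in_bigo o0 o11 oP o10 o01)
  have "(\<lambda>l. 1 - hell_aff (\<nu> (l * (s + t))) (conv_meas \<nu> (l * s) (l * t))) \<in> O[at_right 0](R)"
  proof (rule bigoI[where c=1])
    show "\<forall>\<^sub>F l in at_right 0. norm (1 - hell_aff (\<nu> (l * (s + t))) (conv_meas \<nu> (l * s) (l * t))) \<le> 1 * norm (R l)"
      using eventually_at_right_less[of "0::real"]
    proof eventually_elim
      case (elim l)
      then show ?case using bound[of l] by simp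
    qed
  qed
  from landau_o.big_trans[OF this oR] show ?thesis unfolding h_def .
qed

end
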